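(* In the weighted kidney exchange game (W-KEG), even with two players, a player can have a strict incentive to hide vertices: there exists a 2-player W-KEG instance in which the independent agent has a unique optimal matching and one player's utility strictly increases when she removes one of her vertices (with its incident edges) from the game.
   Context: W-KEG: players $N=\{1,\dots,n\}$; player $p$ has internal graph $G^p=(V^p,E^p)$ (pairwise disjoint vertex sets); $E^I$ is a set of external edges each joining vertices of two different players; $E^I_p$ is the set of external edges incident to $V^p$. Each player $p$ has nonnegative weights $w^p_e$ on $E^p\cup E^I_p$. A strategy of player $p$ is a matching $M^p$ of $G^p$. The independent agent selects a maximum-weight matching $M^I$ of the external edges whose endpoints are uncovered by $\bigcup_pM^p$, where an external edge $(v,u)$ with $v\in V^i$, $u\in V^j$ has weight $w^I_{vu}=w^i_{vu}+w^j_{vu}$. With $M^I_p$ the edges of $M^I$ incident to $V^p$, player $p$'s utility is $\sum_{e\in M^p}w^p_e+\sum_{e\in M^I_p}w^p_e$. *)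

theory Defs
  imports Complex_Main
begin

text \<open>Vertices are natural numbers; the owner of vertex v is own v
(so the players' vertex sets V^p = {v \<in> V. own v = p} are pairwise disjoint).\<close>

type_synonym vtx = nat
type_synonym edge = "nat set"

definition is_matching :: "edge set \<Rightarrow> bool" where
  "is_matching M \<longleftrightarrow> (\<forall>e\<in>M. \<forall>f\<in>M. e \<noteq> f \<longrightarrow> e \<inter> f = {})"

definition int_edges :: "(vtx \<Rightarrow> nat) \<Rightarrow> edge set \<Rightarrow> nat \<Rightarrow> edge set" where
  "int_edges own E p = {e\<in>E. \<forall>v\<in>e. own v = p}"

definition ext_edges :: "(vtx \<Rightarrow> nat) \<Rightarrow> edge set \<Rightarrow> edge set" where
  "ext_edges own E = {e\<in>E. \<exists>u\<in>e. \<exists>v\<in>e. own u \<noteq> own v}"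

definition incident_edges :: "(vtx \<Rightarrow> nat) \<Rightarrow> edge set \<Rightarrow> nat \<Rightarrow> edge set" where
  "incident_edges own E p = {e\<in>E. \<exists>v\<in>e. own v = p}"

definition wkeg :: "nat set \<Rightarrow> vtx set \<Rightarrow> (vtx \<Rightarrow> nat) \<Rightarrow> edge set
                    \<Rightarrow> (nat \<Rightarrow> edge \<Rightarrow> real) \<Rightarrow> bool" where
  "wkeg N V own E w \<longleftrightarrow> finite V \<and> own ` V \<subseteq> N
     \<and> (\<forall>e\<in>E. \<exists>u v. e = {u, v} \<and> u \<noteq> v \<and> u \<in> V \<and> v \<in> V)
     \<and> (\<forall>p\<in>N. \<forall>e \<in> int_edges own E p \<union> incident_edges own (ext_edges own E) p. 0 \<le> w p e)"

definition wI :: "(vtx \<Rightarrow> nat) \<Rightarrow> (nat \<Rightarrow> edge \<Rightarrow> real) \<Rightarrow> edge \<Rightarrow> real" where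
  "wI own w e = (\<Sum>p \<in> own ` e. w p e)"

definition valid_profile :: "nat set \<Rightarrow> (vtx \<Rightarrow> nat) \<Rightarrow> edge set \<Rightarrow> (nat \<Rightarrow> edge set) \<Rightarrow> bool" where
  "valid_profile N own E S \<longleftrightarrow> (\<forall>p\<in>N. S p \<subseteq> int_edges own E p \<and> is_matching (S p))"

definition IA_feasible :: "nat set \<Rightarrow> (vtx \<Rightarrow> nat) \<Rightarrow> edge set \<Rightarrow> (nat \<Rightarrow> edge set)
                           \<Rightarrow> edge set \<Rightarrow> bool" where
  "IA_feasible N own E S M \<longleftrightarrow> M \<subseteq> ext_edges own E \<and> is_matching M
     \<and> (\<forall>e\<in>M. e \<inter> \<Union>(\<Union>p\<in>N. S p) = {})"

definition IA_opt :: "nat set \<Rightarrow> (vtx \<Rightarrow> nat) \<Rightarrow> edge set \<Rightarrow> (nat \<Rightarrow> edge \<Rightarrow> real)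
                      \<Rightarrow> (nat \<Rightarrow> edge set) \<Rightarrow> edge set \<Rightarrow> bool" where
  "IA_opt N own E w S M \<longleftrightarrow> IA_feasible N own E S M
     \<and> (\<forall>M'. IA_feasible N own E S M' \<longrightarrow> (\<Sum>e\<in>M'. wI own w e) \<le> (\<Sum>e\<in>M. wI own w e))"

definition utility :: "(vtx \<Rightarrow> nat) \<Rightarrow> (nat \<Rightarrow> edge \<Rightarrow> real) \<Rightarrow> (nat \<Rightarrow> edge set)
                       \<Rightarrow> edge set \<Rightarrow> nat \<Rightarrow> real" where
  "utility own w S MI p = (\<Sum>e\<in>S p. w p e) + (\<Sum>e \<in> incident_edges own MI p. w p e)"

definition remove_vertex :: "vtx \<Rightarrow> edge set \<Rightarrow> edge set" where
  "remove_vertex x E = {e\<in>E. x \<notin> e}"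

end

theory Submission
  imports Defs
begin

definition own0 :: "nat \<Rightarrow> nat" where "own0 v = (if v = 2 then 2 else 1)"
definition w0 :: "nat \<Rightarrow> edge \<Rightarrow> real" where
  "w0 p e = (if p = 1 \<and> e = {0,2} then 1 else if p = 2 \<and> e = {1,2} then 5 else 0)"
definition E0 :: "edge set" where "E0 = {{0,2},{1,2}}"
definition S0 :: "nat \<Rightarrow> edge set" where "S0 p = {}"

lemma sub2: "M \<subseteq> {A,B} \<Longrightarrow> M = {} \<or> M = {A} \<or> M = {B} \<or> M = {A,B}"
  by blast

lemma ne: "({0,2}::nat set) \<noteq> {1,2}"
proof
  assume "({0,2}::nat set) = {1,2}"
  then have "(0::nat) \<in> {1,2}" by (metis insertI1)
  then show False by simp
qed

lemma ne': "({1,2}::nat set) \<noteq> {0,2}" using ne by metis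

lemma ext0: "ext_edges own0 E0 = {{0,2},{1,2}}"
  unfolding ext_edges_def E0_def own0_def by auto

lemma rem0: "remove_vertex 1 E0 = {{0,2}}"
  unfolding remove_vertex_def E0_def by auto

lemma ext1: "ext_edges own0 {{0,2}} = {{0,2}}"
  unfolding ext_edges_def own0_def by auto

lemma wI1: "wI own0 w0 {0,2} = 1"
  unfolding wI_def own0_def w0_def using ne ne' by simp
lemma wI2: "wI own0 w0 {1,2} = 5"
  unfolding wI_def own0_def w0_def using ne ne' by simp


lemma feas0: "IA_feasible {1,2} own0 E0 S0 M \<longleftrightarrow> M = {} \<or> M = {{0,2}} \<or> M = {{1,2}}"
proof
  assume h0: "IA_feasible {1,2} own0 E0 S0 M"
  have m1: "M \<subseteq> ext_edges own0 E0" and m3: "is_matching M" using h0 unfolding IA_feasible_def by blast+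
  have m2: "M \<subseteq> {{0,2},{1,2}}" using m1 by (simp only: ext0)
  have nm:  "\<not> is_matching {{0,2},{1::nat,2}}"
  proof
    assume h: "is_matching {{0,2},{1::nat,2}}"
    have "{0,2} \<inter> {1::nat,2} = {}" 
      by (rule h[unfolded is_matching_def, rule_format, OF insertI1 insertI2[OF insertI1] ne])
    moreover have "(2::nat) \<in> {0,2} \<inter> {1,2}" by simp
    ultimately show False by blast
  qed
  have "M \<noteq> {{0,2},{1,2}}" using m3 nm by metis
  thus "M = {} \<or> M = {{0,2}} \<or> M = {{1,2}}" using sub2[OF m2] by metis
next
  assume "M = {} \<or> M = {{0,2}} \<or> M = {{1,2}}"
  thus "IA_feasible {1,2} own0 E0 S0 M"
    by (elim disjE) (simp_all add: IA_feasible_def ext0 S0_def is_matching_def)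
qed

lemma feas1: "IA_feasible {1,2} own0 {{0,2}} S0 M \<longleftrightarrow> M = {} \<or> M = {{0,2}}"
proof
  assume h0: "IA_feasible {1,2} own0 {{0,2}} S0 M"
  have m1: "M \<subseteq> ext_edges own0 {{0,2}}" using h0 unfolding IA_feasible_def by blast
  have "M \<subseteq> {{0,2}}" using m1 by (simp only: ext1)
  thus "M = {} \<or> M = {{0,2}}" by blast
next
  assume "M = {} \<or> M = {{0,2}}"
  thus "IA_feasible {1,2} own0 {{0,2}} S0 M"
    by (elim disjE) (simp_all add: IA_feasible_def ext1 S0_def is_matching_def)
qed

lemma s1: "(\<Sum>e\<in>{{0,2}}. wI own0 w0 e) = 1" using wI1 by simp
lemma s2: "(\<Sum>e\<in>{{1,2}}. wI own0 w0 e) = 5" using wI2 by simp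
lemma s0: "(\<Sum>e\<in>({}::edge set). wI own0 w0 e) = 0" by simp

lemma opt0: "IA_opt {1,2} own0 E0 w0 S0 M \<longleftrightarrow> M = {{1,2}}"
proof
  assume h: "IA_opt {1,2} own0 E0 w0 S0 M"
  have f: "M = {} \<or> M = {{0,2}} \<or> M = {{1,2}}" using h unfolding IA_opt_def feas0 by simp
  have "(\<Sum>e\<in>{{1,2}}. wI own0 w0 e) \<le> (\<Sum>e\<in>M. wI own0 w0 e)"
    using h unfolding IA_opt_def feas0 by simp
  hence "5 \<le> (\<Sum>e\<in>M. wI own0 w0 e)" by (simp only: s2)
  thus "M = {{1,2}}" using f s0 s1 by auto
next
  assume h: "M = {{1,2}}"
  have "\<forall>M'. IA_feasible {1,2} own0 E0 S0 M' \<longrightarrow> (\<Sum>e\<in>M'. wI own0 w0 e) \<le> 5"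
    unfolding feas0 using s0 s1 s2 by auto
  thus "IA_opt {1,2} own0 E0 w0 S0 M" unfolding IA_opt_def h s2 feas0 by simp
qed

lemma opt1: "IA_opt {1,2} own0 {{0,2}} w0 S0 M \<longleftrightarrow> M = {{0,2}}"
proof
  assume h: "IA_opt {1,2} own0 {{0,2}} w0 S0 M"
  have f: "M = {} \<or> M = {{0,2}}" using h unfolding IA_opt_def feas1 by simp
  have "(\<Sum>e\<in>{{0,2}}. wI own0 w0 e) \<le> (\<Sum>e\<in>M. wI own0 w0 e)"
    using h unfolding IA_opt_def feas1 by simp
  hence "1 \<le> (\<Sum>e\<in>M. wI own0 w0 e)" by (simp only: s1)
  thus "M = {{0,2}}" using f s0 by auto
next
  assume h: "M = {{0,2}}"
  have "\<forall>M'. IA_feasible {1,2} own0 {{0,2}} S0 M' \<longrightarrow> (\<Sum>e\<in>M'. wI own0 w0 e) \<le> 1"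
    unfolding feas1 using s0 s1 by auto
  thus "IA_opt {1,2} own0 {{0,2}} w0 S0 M" unfolding IA_opt_def h s1 feas1 by simp
qed

lemma util0: "utility own0 w0 S0 {{1,2}} 1 = 0"
proof -
  have "incident_edges own0 {{1,2}} 1 = {{1,2}}"
    unfolding incident_edges_def own0_def by auto
  thus ?thesis unfolding utility_def S0_def w0_def using ne' by simp
qed

lemma util1: "utility own0 w0 S0 {{0,2}} 1 = 1"
proof -
  have "incident_edges own0 {{0,2}} 1 = {{0,2}}"
    unfolding incident_edges_def own0_def by auto
  thus ?thesis unfolding utility_def S0_def w0_def by simp
qed

theorem lemma2:
  shows "\<exists>(V :: vtx set) own E w S p x.
     wkeg {1, 2} V own E w \<and> p \<in> {1, 2} \<and> x \<in> V \<and> own x = p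
   \<and> valid_profile {1, 2} own E S
   \<and> valid_profile {1, 2} own (remove_vertex x E) S
   \<and> (\<exists>!M. IA_opt {1, 2} own E w S M)
   \<and> (\<forall>M M'. IA_opt {1, 2} own E w S M
        \<longrightarrow> IA_opt {1, 2} own (remove_vertex x E) w S M'
        \<longrightarrow> utility own w S M p < utility own w S M' p)"
proof (intro exI conjI)
  show "wkeg {1, 2} {0,1,2} own0 E0 w0"
  proof -
    have a: "\<exists>u v. ({0,2}::nat set) = {u, v} \<and> u \<noteq> v \<and> u \<in> {0,1,2} \<and> v \<in> {0,1,2}"
      by (rule exI[of _ 0], rule exI[of _ 2]) simp
    have b: "\<exists>u v. ({1,2}::nat set) = {u, v} \<and> u \<noteq> v \<and> u \<in> {0,1,2} \<and> v \<in> {0,1,2}"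
      by (rule exI[of _ 1], rule exI[of _ 2]) simp
    have c: "\<And>p e. 0 \<le> w0 p e" by (simp add: w0_def)
    have d: "own0 ` {0,1,2} \<subseteq> {1,2}" by (auto simp: own0_def)
    have e: "\<forall>e\<in>E0. \<exists>u v. e = {u, v} \<and> u \<noteq> v \<and> u \<in> {0,1,2} \<and> v \<in> {0,1,2}"
      unfolding E0_def using a b by blast
    show ?thesis unfolding wkeg_def using c d e by simp
  qed
  show "(1::nat) \<in> {1,2}" by simp
  show "(1::nat) \<in> {0,1,2}" by simp
  show "own0 1 = 1" by (simp add: own0_def)
  show "valid_profile {1, 2} own0 E0 S0"
    unfolding valid_profile_def S0_def is_matching_def by auto
  show "valid_profile {1, 2} own0 (remove_vertex 1 E0) S0"
    unfolding valid_profile_def S0_def is_matching_def by auto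
  show "\<exists>!M. IA_opt {1, 2} own0 E0 w0 S0 M" unfolding opt0 by auto
  show "\<forall>M M'. IA_opt {1, 2} own0 E0 w0 S0 M
        \<longrightarrow> IA_opt {1, 2} own0 (remove_vertex 1 E0) w0 S0 M'
        \<longrightarrow> utility own0 w0 S0 M 1 < utility own0 w0 S0 M' 1"
    unfolding rem0 opt0 opt1 using util0 util1 by auto
qed

end
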